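(* Fix a context $s$ of a contextual bandit with finite action set $\mathcal{A}$, a policy $\pi_{\mathrm{old}}(\cdot\mid s)$ with full support, a reward $r(s,\cdot)$ that is not constant on $\mathcal{A}$, a constant $\delta(s)>0$ and $\epsilon\in(0,1)$. Let $A(a)=r(s,a)-\mathbb{E}_{a'\sim\pi_{\mathrm{old}}}[r(s,a')]$ and, for $\bar{\pi}(\cdot\mid s)\in\Delta(\mathcal{A})$ with $\rho(a)=\bar{\pi}(a\mid s)/\pi_{\mathrm{old}}(a\mid s)$, $$\mathfrak{D}^{\mathrm{GSPO}}_{\pi_{\mathrm{old}}}(\bar{\pi}\mid s)=\mathbb{E}_{a\sim\pi_{\mathrm{old}}}\Big[\rho(a)A(a)-\min\Big(\frac{\rho(a)A(a)}{\delta(s)},\frac{\mathrm{clip}(\rho(a),1\pm\epsilon)A(a)}{\delta(s)}\Big)\Big].$$ Then $\mathfrak{D}^{\mathrm{GSPO}}_{\pi_{\mathrm{old}}}(\bar{\pi}\mid s)\ge0$ for all $\bar{\pi}(\cdot\mid s)\in\Delta(\mathcal{A})$ if and only if $\delta(s)=1$. Consequently, the drift is nonnegative at every context for all such policies if and only if $\delta\equiv1$.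
   Context: This is the drift functional induced by a PPO-style clipped objective with group-variance-normalized advantages $A/\delta(s)$ (as in GSPO), where $\delta(s)$ is the (positive) standard deviation of rewards in the group sampled for context $s$, treated as a fixed positive number. $\mathrm{clip}(x,1\pm\epsilon)=\min(\max(x,1-\epsilon),1+\epsilon)$. *)

theory Defs
  imports Complex_Main
begin

definition clip :: "real \<Rightarrow> real \<Rightarrow> real" where
  "clip \<epsilon> x = min (max x (1 - \<epsilon>)) (1 + \<epsilon>)"

definition simplex :: "('a::finite \<Rightarrow> real) set" where
  "simplex = {p. (\<forall>a. 0 \<le> p a) \<and> (\<Sum>a\<in>UNIV. p a) = 1}"

definition adv :: "('a::finite \<Rightarrow> real) \<Rightarrow> ('a \<Rightarrow> real) \<Rightarrow> 'a \<Rightarrow> real" where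
  "adv \<pi>old r a = r a - (\<Sum>a'\<in>UNIV. \<pi>old a' * r a')"

definition gspo_drift ::
  "('a::finite \<Rightarrow> real) \<Rightarrow> ('a \<Rightarrow> real) \<Rightarrow> real \<Rightarrow> real \<Rightarrow> ('a \<Rightarrow> real) \<Rightarrow> real" where
  "gspo_drift \<pi>old r \<delta> \<epsilon> \<pi>bar =
     (\<Sum>a\<in>UNIV. \<pi>old a *
        (let \<rho> = \<pi>bar a / \<pi>old a; A = adv \<pi>old r a in
           \<rho> * A - min (\<rho> * A / \<delta>) (clip \<epsilon> \<rho> * A / \<delta>)))"

end

theory Submission
  imports Defs
begin

lemma drift_nonneg1:
  fixes p :: "'a::finite \<Rightarrow> real"
  assumes "\<And>a. p a > 0"
  shows "gspo_drift p r 1 e q \<ge> 0"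
  unfolding gspo_drift_def Let_def
proof (rule sum_nonneg)
  fix x
  have h: "0 \<le> q x / p x * adv p r x - min (q x / p x * adv p r x / 1) (clip e (q x / p x) * adv p r x / 1)"
    by (simp add: min_def)
  have px: "0 \<le> p x" using assms[of x] by (rule less_imp_le)
  show "0 \<le> p x * (q x / p x * adv p r x - min (q x / p x * adv p r x / 1) (clip e (q x / p x) * adv p r x / 1))"
    by (rule mult_nonneg_nonneg[OF px h])
qed

lemma sum_adv_zero:
  fixes p :: "'a::finite \<Rightarrow> real"
  assumes "p \<in> simplex"
  shows "(\<Sum>a\<in>UNIV. p a * adv p r a) = 0"
proof -
  have s1: "(\<Sum>a\<in>UNIV. p a) = 1" using assms by (simp add: simplex_def)
  define m where "m = (\<Sum>a'\<in>UNIV. p a' * r a')"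
  have "(\<Sum>a\<in>UNIV. p a * adv p r a) = (\<Sum>a\<in>UNIV. p a * r a - p a * m)"
    unfolding adv_def m_def by (simp add: right_diff_distrib)
  also have "\<dots> = (\<Sum>a\<in>UNIV. p a * r a) - (\<Sum>a\<in>UNIV. p a * m)"
    by (rule sum_subtractf)
  also have "(\<Sum>a\<in>UNIV. p a * m) = (\<Sum>a\<in>UNIV. p a) * m"
    by (rule sum_distrib_right[symmetric])
  finally show ?thesis using s1 m_def by simp
qed

lemma adv_signs:
  fixes p :: "'a::finite \<Rightarrow> real"
  assumes "p \<in> simplex" "\<And>a. p a > 0" "\<exists>a b. r a \<noteq> r b"
  shows "(\<exists>a. adv p r a < 0) \<and> (\<exists>a. adv p r a > 0)"
proof -
  let ?f = "\<lambda>a. p a * adv p r a"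
  have z: "(\<Sum>a\<in>UNIV. ?f a) = 0" using sum_adv_zero[OF assms(1)] .
  obtain a1 where nz: "adv p r a1 \<noteq> 0"
  proof -
    obtain a b where ab: "r a \<noteq> r b" using assms(3) by blast
    have "adv p r a \<noteq> 0 \<or> adv p r b \<noteq> 0"
    proof (rule ccontr)
      assume "\<not> (adv p r a \<noteq> 0 \<or> adv p r b \<noteq> 0)"
      then have "r a - (\<Sum>a'\<in>UNIV. p a' * r a') = 0" "r b - (\<Sum>a'\<in>UNIV. p a' * r a') = 0"
        unfolding adv_def by auto
      then show False using ab by linarith
    qed
    then show ?thesis using that by blast
  qed
  have pa1: "p a1 > 0" using assms(2) .
  have neg: "\<exists>a. adv p r a < 0"
  proof (rule ccontr)
    assume "\<not> ?thesis"
    then have ge0: "\<And>a. 0 \<le> adv p r a" by (simp add: not_less)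
    have ge: "\<forall>a\<in>UNIV. 0 \<le> ?f a"
      using mult_nonneg_nonneg[OF less_imp_le[OF assms(2)] ge0] by blast
    have iff: "(\<Sum>a\<in>UNIV. ?f a) = 0 \<longleftrightarrow> (\<forall>a\<in>UNIV. ?f a = 0)"
      by (rule sum_nonneg_eq_0_iff) (use ge in auto)
    have "\<forall>a\<in>UNIV. ?f a = 0" using iff z by simp
    then have "p a1 * adv p r a1 = 0" by blast
    then show False using nz pa1 by simp
  qed
  have pos: "\<exists>a. adv p r a > 0"
  proof (rule ccontr)
    assume "\<not> ?thesis"
    then have le: "\<And>a. adv p r a \<le> 0" by (simp add: not_less)
    have ge: "\<forall>a\<in>UNIV. 0 \<le> - ?f a"
    proof
      fix a
      have "0 \<le> p a * (- adv p r a)" using mult_nonneg_nonneg[OF less_imp_le[OF assms(2)[of a]], of "- adv p r a"] le[of a] by linarith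
      then show "0 \<le> - ?f a" by simp
    qed
    have z2: "(\<Sum>a\<in>UNIV. - ?f a) = 0" using z by (simp add: sum_negf)
    have iff: "(\<Sum>a\<in>UNIV. - ?f a) = 0 \<longleftrightarrow> (\<forall>a\<in>UNIV. - ?f a = 0)"
      by (rule sum_nonneg_eq_0_iff) (use ge in auto)
    have "\<forall>a\<in>UNIV. - ?f a = 0" using iff z2 by simp
    then have "p a1 * adv p r a1 = 0" by simp
    then show False using nz pa1 by simp
  qed
  show ?thesis using neg pos by blast
qed

lemma drift_mix:
  fixes p :: "'a::finite \<Rightarrow> real"
    and c :: 'a
  assumes pS: "p \<in> simplex" and pp: "\<And>a. p a > 0" and e: "0 < e" "e < 1"
  defines "t \<equiv> e * p c"
  defines "q \<equiv> (\<lambda>b. (1 - t) * p b + (if b = c then t else 0))"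
  shows "q \<in> simplex" and "gspo_drift p r d e q = (1 - 1/d) * (t * adv p r c)"
proof -
  have s1: "(\<Sum>a\<in>UNIV. p a) = 1" using pS by (simp add: simplex_def)
  have pc: "p c \<le> 1"
  proof -
    have "p c \<le> (\<Sum>a\<in>UNIV. p a)"
      by (rule member_le_sum) (use pp in \<open>auto intro: less_imp_le\<close>)
    then show ?thesis using s1 by simp
  qed
  have t0: "0 < t" using e pp by (simp add: t_def)
  have te: "t \<le> e" using pc e pp unfolding t_def by (simp add: mult_left_le)
  have sq: "(\<Sum>b\<in>UNIV. q b) = 1"
    unfolding q_def by (simp add: sum.distrib sum_distrib_left[symmetric] s1)
  have qn: "0 \<le> q b" for b
  proof -
    have "0 \<le> (1 - t) * p b" using te e pp by (simp add: less_imp_le)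
    then show ?thesis unfolding q_def using t0 by simp
  qed
  show "q \<in> simplex" unfolding simplex_def using sq qn by blast
  have trm: "p b * (let \<rho> = q b / p b; A = adv p r b in
           \<rho> * A - min (\<rho> * A / d) (clip e \<rho> * A / d)) = (1 - 1/d) * (q b * adv p r b)" for b
  proof -
    have pb: "p b > 0" using pp by simp
    have rho: "q b / p b = (1 - t) + (if b = c then e else 0)"
      using pb unfolding q_def t_def by (auto simp: field_simps)
    have cl: "clip e (q b / p b) = q b / p b"
      unfolding clip_def rho using te e t0 by auto
    show ?thesis unfolding Let_def cl using pb by (simp add: field_simps)
  qed
  have "gspo_drift p r d e q = (1 - 1/d) * (\<Sum>b\<in>UNIV. q b * adv p r b)"
    unfolding gspo_drift_def trm by (simp add: sum_distrib_left)
  also have "(\<Sum>b\<in>UNIV. q b * adv p r b) = t * adv p r c"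
  proof -
    have "(\<Sum>b\<in>UNIV. q b * adv p r b) = (1 - t) * (\<Sum>b\<in>UNIV. p b * adv p r b) + t * adv p r c"
    proof -
      have "\<And>b. q b * adv p r b = (1 - t) * (p b * adv p r b) + (if b = c then t * adv p r c else 0)"
        unfolding q_def by (simp add: algebra_simps)
      then have "(\<Sum>b\<in>UNIV. q b * adv p r b) = (\<Sum>b\<in>UNIV. (1 - t) * (p b * adv p r b) + (if b = c then t * adv p r c else 0))"
        by presburger
      also have "\<dots> = (1 - t) * (\<Sum>b\<in>UNIV. p b * adv p r b) + t * adv p r c"
        by (simp add: sum.distrib sum_distrib_left)
      finally show ?thesis .
    qed
    then show ?thesis using sum_adv_zero[OF pS] by simp
  qed
  finally show "gspo_drift p r d e q = (1 - 1/d) * (t * adv p r c)" .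
qed

lemma single:
  fixes p :: "'a::finite \<Rightarrow> real"
  assumes pS: "p \<in> simplex" and pp: "\<And>a. p a > 0" and nc: "\<exists>a b. r a \<noteq> r b"
    and dp: "d > 0" and e: "0 < e" "e < 1"
  shows "(\<forall>q\<in>simplex. gspo_drift p r d e q \<ge> 0) \<longleftrightarrow> d = 1"
proof
  assume "d = 1" then show "\<forall>q\<in>simplex. gspo_drift p r d e q \<ge> 0"
    using drift_nonneg1[where p=p] pp by blast
next
  assume H: "\<forall>q\<in>simplex. gspo_drift p r d e q \<ge> 0"
  obtain an ap where an: "adv p r an < 0" and ap: "adv p r ap > 0"
    using adv_signs[OF pS pp nc] by blast
  show "d = 1"
  proof (rule ccontr)
    assume "d \<noteq> 1"
    then consider "d > 1" | "d < 1" by linarith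
    then show False
    proof cases
      case 1
      define a0 where "a0 = an"
      note m = drift_mix[OF pS pp e, where c=a0]
      have c: "1 - 1/d > 0" using 1 by simp
      have t0: "e * p a0 > 0" using e pp by simp
      have "(1 - 1/d) * (e * p a0 * adv p r a0) < 0"
        using mult_pos_neg[OF c mult_pos_neg[OF t0 an[folded a0_def]]] .
      moreover have "0 \<le> (1 - 1/d) * (e * p a0 * adv p r a0)"
        using bspec[OF H m(1)] m(2) by (metis)
      ultimately show False by linarith
    next
      case 2
      define a0 where "a0 = ap"
      note m = drift_mix[OF pS pp e, where c=a0]
      have c: "1 - 1/d < 0" using 2 dp by (simp add: field_simps)
      have t0: "e * p a0 * adv p r a0 > 0" using e pp ap unfolding a0_def by simp
      have "(1 - 1/d) * (e * p a0 * adv p r a0) < 0"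
        using mult_neg_pos[OF c t0] .
      moreover have "0 \<le> (1 - 1/d) * (e * p a0 * adv p r a0)"
        using bspec[OF H m(1)] m(2) by (metis)
      ultimately show False by linarith
    qed
  qed
qed

theorem lemma8:
  fixes \<pi>old :: "'s \<Rightarrow> 'a::finite \<Rightarrow> real"
    and r :: "'s \<Rightarrow> 'a \<Rightarrow> real"
    and \<delta> :: "'s \<Rightarrow> real"
    and \<epsilon> :: real
  assumes pol: "\<And>s. \<pi>old s \<in> simplex"
    and full_support: "\<And>s a. \<pi>old s a > 0"
    and nonconst: "\<And>s. \<exists>a b. r s a \<noteq> r s b"
    and delta_pos: "\<And>s. \<delta> s > 0"
    and eps: "0 < \<epsilon>" "\<epsilon> < 1"
  shows "(\<forall>s. (\<forall>\<pi>bar\<in>simplex. gspo_drift (\<pi>old s) (r s) (\<delta> s) \<epsilon> \<pi>bar \<ge> 0)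
                \<longleftrightarrow> \<delta> s = 1)
         \<and> ((\<forall>s. \<forall>\<pi>bar\<in>simplex. gspo_drift (\<pi>old s) (r s) (\<delta> s) \<epsilon> \<pi>bar \<ge> 0)
                \<longleftrightarrow> (\<forall>s. \<delta> s = 1))"
proof -
  have A: "\<And>s. (\<forall>\<pi>bar\<in>simplex. gspo_drift (\<pi>old s) (r s) (\<delta> s) \<epsilon> \<pi>bar \<ge> 0) \<longleftrightarrow> \<delta> s = 1"
    using single[OF pol full_support nonconst delta_pos eps] by blast
  show ?thesis using A by blast
qed

end
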